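(* Let $A\subset\mathbb{R}^2$ be a set which is not totally disconnected, i.e. $A$ has a connected component which is not a singleton. Then $A+S^1$ has non-empty interior.
   Context: $S^1$ is the Euclidean unit circle in $\mathbb{R}^2$; $X+Y=\{x+y:x\in X,y\in Y\}$. *)

theory Defs
  imports "HOL-Analysis.Analysis"
begin

end

theory Submission
  imports Defs
begin

theorem mainTheorem8:
  fixes A :: "(real^2) set"
  assumes "\<exists>x\<in>A. \<not> (\<exists>y. connected_component_set A x = {y})"
  shows "interior {a + s | a s. a \<in> A \<and> s \<in> sphere (0::real^2) 1} \<noteq> {}"
proof -
  obtain p where pA: "p \<in> A" and ns: "\<not> (\<exists>y. connected_component_set A p = {y})"
    using assms by blast
  define C where "C = connected_component_set A p"
  have pC: "p \<in> C" unfolding C_def using pA by (simp add: connected_component_refl)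
  obtain q where qC: "q \<in> C" and qp: "q \<noteq> p"
    using ns pC unfolding C_def by blast
  have conC: "connected C" unfolding C_def by (simp add: connected_connected_component)
  have CA: "C \<subseteq> A" unfolding C_def by (simp add: connected_component_subset)
  define U where "U = ball p 1 \<inter> {z. dist z q > 1}"
  have oU: "open U" unfolding U_def
    by (intro open_Int open_ball) (simp add: open_Collect_less continuous_on_dist continuous_on_const continuous_on_id)
  define d where "d = dist p q"
  have d0: "d > 0" using qp unfolding d_def by simp
  define s where "s = 1 - min d 1 / 2"
  have s0: "s > 0" "s < 1" "d + s > 1" using d0 unfolding s_def by (auto simp: min_def)
  define z where "z = p + (s / d) *\<^sub>R (p - q)"
  have "dist z p = s" unfolding z_def dist_norm using d0 s0
    by (simp add: d_def dist_norm)
  moreover have "dist z q = d + s"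
  proof -
    have "z - q = (1 + s / d) *\<^sub>R (p - q)" unfolding z_def by (simp add: algebra_simps)
    then have "dist z q = (1 + s/d) * d" using d0 s0 unfolding dist_norm d_def
      by (simp add: dist_norm)
    also have "\<dots> = d + s" using d0 by (simp add: field_simps)
    finally show ?thesis .
  qed
  ultimately have zU: "z \<in> U" unfolding U_def using s0 by (simp add: dist_commute)
  have sub: "U \<subseteq> {a + s | a s. a \<in> A \<and> s \<in> sphere (0::real^2) 1}"
  proof
    fix w assume wU: "w \<in> U"
    have "connected ((\<lambda>c. dist w c) ` C)"
      by (intro connected_continuous_image conC) (simp add: continuous_on_dist continuous_on_const continuous_on_id)
    moreover have "dist w p \<in> (\<lambda>c. dist w c) ` C" "dist w q \<in> (\<lambda>c. dist w c) ` C"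
      using pC qC by auto
    moreover have "dist w p \<le> 1" "1 \<le> dist w q" using wU unfolding U_def
      by (auto simp: dist_commute)
    ultimately have "1 \<in> (\<lambda>c. dist w c) ` C" unfolding connected_iff_interval by blast
    then obtain c where cC: "c \<in> C" and dc: "dist w c = 1" by auto
    have "w = c + (w - c)" by simp
    moreover have "w - c \<in> sphere 0 1" using dc by (simp add: dist_norm norm_minus_commute)
    ultimately show "w \<in> {a + s | a s. a \<in> A \<and> s \<in> sphere (0::real^2) 1}"
      using cC CA by blast
  qed
  have "U \<subseteq> interior {a + s | a s. a \<in> A \<and> s \<in> sphere (0::real^2) 1}"
    using interior_maximal[OF sub oU] .
  then show ?thesis using zU by blast
qed

end
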